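(* Let $a,b\in\mathbb R$ and $s,t\in\mathbb N$. The system $\ddot x_1=a\,\dot x_1^{2-t}\dot x_2^{t}$, $\ddot x_2=b\,\dot x_1^{2-s}\dot x_2^{s}$ on $\mathbb R^2$ (spray $S=y_1\frac{\partial}{\partial x_1}+y_2\frac{\partial}{\partial x_2}+a y_1^{2-t}y_2^t\frac{\partial}{\partial y_1}+b y_1^{2-s}y_2^s\frac{\partial}{\partial y_2}$, considered where defined, e.g. on $y_1\ne0$, $y_2\neq 0$) cannot be the geodesic system of a non-Berwald Landsberg metric: there is no open set $U$ on which the Berwald curvature $\mathcal R$ of $S$ is not identically zero together with a function $E:U\to\mathbb R$ satisfying (H), (EL), (Ls) with $(g_{ij})$ positive definite.
   Context: Coordinates $(x^1,x^2,y^1,y^2)=(x_1,x_2,y_1,y_2)$ on $T\mathbb R^2$. For a spray $S=y^i\frac{\partial}{\partial x^i}+f^i\frac{\partial}{\partial y^i}$: $\Gamma^i_j=-\frac12\frac{\partial f^i}{\partial y^j}$, $\Gamma^i_{jk}=\frac{\partial\Gamma^i_j}{\partial y^k}$; Berwald curvature $\mathcal R=-\frac12\frac{\partial^3f^l}{\partial y^i\partial y^j\partial y^k}dx^i\otimes dx^j\otimes dx^k\otimes\frac{\partial}{\partial y^l}$ (a Landsberg metric is of Berwald type iff $\mathcal R=0$). For $E$ smooth, $g_{ij}=\frac{\partial^2E}{\partial y^i\partial y^j}$; (H) $y^i\frac{\partial E}{\partial y^i}-2E=0$; (EL) $y^j\frac{\partial^2E}{\partial x^j\partial y^i}+f^j\frac{\partial^2E}{\partial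 y^j\partial y^i}-\frac{\partial E}{\partial x^i}=0$; (Ls) $\frac{\partial g_{jk}}{\partial x^i}-\Gamma^l_i\frac{\partial g_{jk}}{\partial y^l}-\Gamma^l_{ik}g_{lj}-\Gamma^l_{ij}g_{lk}=0$. *)

theory Defs
  imports "HOL-Analysis.Analysis"
begin

text \<open>Points of T R^2 are quadruples p = (x1, x2, y1, y2).\<close>
type_synonym pt = "real \<times> real \<times> real \<times> real"

definition xc :: "nat \<Rightarrow> pt \<Rightarrow> real" where
  "xc i p = (if i = 1 then fst p else fst (snd p))"

definition yc :: "nat \<Rightarrow> pt \<Rightarrow> real" where
  "yc i p = (if i = 1 then fst (snd (snd p)) else snd (snd (snd p)))"

definition Xd :: "nat \<Rightarrow> pt" where
  "Xd i = (if i = 1 then (1,0,0,0) else (0,1,0,0))"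

definition Yd :: "nat \<Rightarrow> pt" where
  "Yd i = (if i = 1 then (0,0,1,0) else (0,0,0,1))"

definition pd :: "pt \<Rightarrow> (pt \<Rightarrow> real) \<Rightarrow> pt \<Rightarrow> real" where
  "pd v F p = deriv (\<lambda>h. F (p + h *\<^sub>R v)) 0"

fun iter_pd :: "pt list \<Rightarrow> (pt \<Rightarrow> real) \<Rightarrow> pt \<Rightarrow> real" where
  "iter_pd [] F = F"
| "iter_pd (v # vs) F = pd v (iter_pd vs F)"

definition smooth_on :: "pt set \<Rightarrow> (pt \<Rightarrow> real) \<Rightarrow> bool" where
  "smooth_on U F \<longleftrightarrow>
     (\<forall>vs. set vs \<subseteq> Basis \<longrightarrow>
        continuous_on U (iter_pd vs F) \<and>
        (\<forall>p\<in>U. \<forall>v\<in>Basis. (\<lambda>h. iter_pd vs F (p + h *\<^sub>R v)) differentiable (at (0::real))))"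

definition fsp :: "real \<Rightarrow> real \<Rightarrow> nat \<Rightarrow> nat \<Rightarrow> nat \<Rightarrow> pt \<Rightarrow> real" where
  "fsp a b s t i p =
     (if i = 1 then a * yc 1 p powi (2 - int t) * yc 2 p powi (int t)
      else b * yc 1 p powi (2 - int s) * yc 2 p powi (int s))"

definition Gam1 :: "(nat \<Rightarrow> pt \<Rightarrow> real) \<Rightarrow> nat \<Rightarrow> nat \<Rightarrow> pt \<Rightarrow> real" where
  "Gam1 f i j p = - (1/2) * pd (Yd j) (f i) p"

definition Gam2 :: "(nat \<Rightarrow> pt \<Rightarrow> real) \<Rightarrow> nat \<Rightarrow> nat \<Rightarrow> nat \<Rightarrow> pt \<Rightarrow> real" where
  "Gam2 f i j k p = pd (Yd k) (Gam1 f i j) p"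

definition Berwald :: "(nat \<Rightarrow> pt \<Rightarrow> real) \<Rightarrow> nat \<Rightarrow> nat \<Rightarrow> nat \<Rightarrow> nat \<Rightarrow> pt \<Rightarrow> real" where
  "Berwald f i j k l p = - (1/2) * pd (Yd i) (pd (Yd j) (pd (Yd k) (f l))) p"

definition gmet :: "(pt \<Rightarrow> real) \<Rightarrow> nat \<Rightarrow> nat \<Rightarrow> pt \<Rightarrow> real" where
  "gmet E i j p = pd (Yd i) (pd (Yd j) E) p"

definition cond_H :: "pt set \<Rightarrow> (pt \<Rightarrow> real) \<Rightarrow> bool" where
  "cond_H U E \<longleftrightarrow> (\<forall>p\<in>U. (\<Sum>i\<in>{1,2::nat}. yc i p * pd (Yd i) E p) - 2 * E p = 0)"

definition cond_EL :: "pt set \<Rightarrow> (nat \<Rightarrow> pt \<Rightarrow> real) \<Rightarrow> (pt \<Rightarrow> real) \<Rightarrow> bool" where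
  "cond_EL U f E \<longleftrightarrow> (\<forall>p\<in>U. \<forall>i\<in>{1,2::nat}.
      (\<Sum>j\<in>{1,2::nat}. yc j p * pd (Xd j) (pd (Yd i) E) p)
    + (\<Sum>j\<in>{1,2::nat}. f j p * pd (Yd j) (pd (Yd i) E) p)
    - pd (Xd i) E p = 0)"

definition cond_Ls :: "pt set \<Rightarrow> (nat \<Rightarrow> pt \<Rightarrow> real) \<Rightarrow> (pt \<Rightarrow> real) \<Rightarrow> bool" where
  "cond_Ls U f E \<longleftrightarrow> (\<forall>p\<in>U. \<forall>i\<in>{1,2::nat}. \<forall>j\<in>{1,2::nat}. \<forall>k\<in>{1,2::nat}.
      pd (Xd i) (gmet E j k) p
    - (\<Sum>l\<in>{1,2::nat}. Gam1 f l i p * pd (Yd l) (gmet E j k) p)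
    - (\<Sum>l\<in>{1,2::nat}. Gam2 f l i k p * gmet E l j p)
    - (\<Sum>l\<in>{1,2::nat}. Gam2 f l i j p * gmet E l k p) = 0)"

definition pos_def_g :: "pt set \<Rightarrow> (pt \<Rightarrow> real) \<Rightarrow> bool" where
  "pos_def_g U E \<longleftrightarrow> (\<forall>p\<in>U. \<forall>v :: nat \<Rightarrow> real. (v 1, v 2) \<noteq> (0, 0) \<longrightarrow>
      (\<Sum>i\<in>{1,2::nat}. \<Sum>j\<in>{1,2::nat}. gmet E i j p * v i * v j) > 0)"

end

theory Submission
  imports Defs
begin

definition HD :: "pt \<Rightarrow> (pt \<Rightarrow> real) \<Rightarrow> pt \<Rightarrow> real \<Rightarrow> bool" where
  "HD v F q D \<longleftrightarrow> ((\<lambda>h. F (q + h *\<^sub>R v)) has_field_derivative D) (at 0)"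

lemma pd_HD: "HD v F q D \<Longrightarrow> pd v F q = D"
  unfolding HD_def pd_def by (rule DERIV_imp_deriv)

lemma HD_const: "HD v (\<lambda>r. c) q 0"
  unfolding HD_def by simp

lemma HD_add: "HD v F q D1 \<Longrightarrow> HD v G q D2 \<Longrightarrow> HD v (\<lambda>r. F r + G r) q (D1 + D2)"
  unfolding HD_def by (rule DERIV_add)

lemma HD_diff: "HD v F q D1 \<Longrightarrow> HD v G q D2 \<Longrightarrow> HD v (\<lambda>r. F r - G r) q (D1 - D2)"
  unfolding HD_def by (rule DERIV_diff)

lemma HD_mult: "HD v F q D1 \<Longrightarrow> HD v G q D2 \<Longrightarrow> HD v (\<lambda>r. F r * G r) q (D1 * G q + F q * D2)"
  unfolding HD_def using DERIV_mult[of "\<lambda>h. F (q + h *\<^sub>R v)" D1 0 UNIV "\<lambda>h. G (q + h *\<^sub>R v)" D2]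
  by (simp add: mult.commute)

lemma eventually_in_open:
  fixes q v :: pt
  assumes "open U" "q \<in> U"
  shows "eventually (\<lambda>h. q + h *\<^sub>R v \<in> U) (nhds (0::real))"
proof -
  obtain e where e: "e > 0" "ball q e \<subseteq> U" using assms open_contains_ball by blast
  have "\<forall>h. dist h 0 < e / (norm v + 1) \<longrightarrow> q + h *\<^sub>R v \<in> U"
  proof (intro allI impI)
    fix h :: real assume h: "dist h 0 < e / (norm v + 1)"
    have "norm (h *\<^sub>R v) = \<bar>h\<bar> * norm v" by simp
    also have "\<dots> \<le> \<bar>h\<bar> * (norm v + 1)" by (simp add: mult_left_mono)
    also have "\<dots> < e"
    proof -
      have pos: "norm v + 1 > 0" by (smt (verit) norm_ge_zero)
      show ?thesis using h pos by (simp add: less_divide_eq)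
    qed
    finally have "dist (q + h *\<^sub>R v) q < e" by (simp add: dist_norm)
    then show "q + h *\<^sub>R v \<in> U" using e by (auto simp: dist_commute)
  qed
  then show ?thesis unfolding eventually_nhds_metric
    by (intro exI[of _ "e / (norm v + 1)"]) (use e in \<open>auto intro!: divide_pos_pos simp: add_nonneg_pos\<close>)
qed

lemma HD_zero:
  assumes "open U" "q \<in> U" "\<forall>r\<in>U. F r = 0" "HD v F q D"
  shows "D = 0"
proof -
  have ev: "eventually (\<lambda>h. F (q + h *\<^sub>R v) = 0) (nhds (0::real))"
    using eventually_in_open[OF assms(1,2), of v] assms(3) by (auto elim: eventually_mono)
  have "((\<lambda>h. (0::real)) has_field_derivative D) (at 0)"
    using assms(4) DERIV_cong_ev[OF refl ev refl] unfolding HD_def by blast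
  then show ?thesis using DERIV_const DERIV_unique by blast
qed

lemma pd_local:
  assumes "open U" "q \<in> U" "\<forall>r\<in>U. F r = G r"
  shows "pd v F q = pd v G q"
proof -
  have ev: "eventually (\<lambda>h. F (q + h *\<^sub>R v) = G (q + h *\<^sub>R v)) (nhds (0::real))"
    using eventually_in_open[OF assms(1,2), of v] assms(3) by (auto elim: eventually_mono)
  show ?thesis unfolding pd_def by (rule deriv_cong_ev[OF ev refl])
qed

lemma iter_pd_append: "iter_pd (ws @ vs) F = iter_pd ws (iter_pd vs F)"
  by (induction ws) auto

lemma smooth_pd: "smooth_on U F \<Longrightarrow> v \<in> Basis \<Longrightarrow> smooth_on U (pd v F)"
  unfolding smooth_on_def
proof (intro allI impI)
  fix vs :: "pt list"
  assume A: "\<forall>vs. set vs \<subseteq> Basis \<longrightarrow> continuous_on U (iter_pd vs F) \<and>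
       (\<forall>p\<in>U. \<forall>v\<in>Basis. (\<lambda>h. iter_pd vs F (p + h *\<^sub>R v)) differentiable at 0)"
    and v: "v \<in> Basis" and vs: "set vs \<subseteq> Basis"
  have e: "iter_pd vs (pd v F) = iter_pd (vs @ [v]) F" by (simp add: iter_pd_append)
  show "continuous_on U (iter_pd vs (pd v F)) \<and>
       (\<forall>p\<in>U. \<forall>va\<in>Basis. (\<lambda>h. iter_pd vs (pd v F) (p + h *\<^sub>R va)) differentiable at 0)"
    unfolding e using A[rule_format, of "vs @ [v]"] v vs by auto
qed

lemma smooth_cont: "smooth_on U F \<Longrightarrow> continuous_on U F"
  unfolding smooth_on_def by (metis empty_subsetI iter_pd.simps(1) list.set(1))

lemma HD_sm: "smooth_on U F \<Longrightarrow> q \<in> U \<Longrightarrow> v \<in> Basis \<Longrightarrow> HD v F q (pd v F q)"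
  unfolding smooth_on_def HD_def pd_def
  by (metis DERIV_deriv_iff_real_differentiable empty_subsetI iter_pd.simps(1) list.set(1))

lemma Xd_Basis[simp]: "Xd i \<in> Basis"
  by (auto simp: Xd_def Basis_prod_def zero_prod_def)

lemma Yd_Basis[simp]: "Yd i \<in> Basis"
  by (auto simp: Yd_def Basis_prod_def zero_prod_def)

lemma HD_line:
  assumes "HD w G (c + s0 *\<^sub>R w) D"
  shows "((\<lambda>\<sigma>. G (c + \<sigma> *\<^sub>R w)) has_field_derivative D) (at s0)"
proof -
  have "((\<lambda>h. G ((c + s0 *\<^sub>R w) + h *\<^sub>R w)) has_field_derivative D) (at (s0 + - s0))"
    using assms unfolding HD_def by simp
  then have d: "((\<lambda>x. G ((c + s0 *\<^sub>R w) + (x + - s0) *\<^sub>R w)) has_field_derivative D) (at s0)"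
    by (subst (asm) DERIV_shift)
  have f: "(\<lambda>x. G ((c + s0 *\<^sub>R w) + (x + - s0) *\<^sub>R w)) = (\<lambda>\<sigma>. G (c + \<sigma> *\<^sub>R w))"
    by (rule ext) (simp add: algebra_simps)
  show ?thesis using d unfolding f .
qed

lemma schwarz_aux:
  fixes F :: "pt \<Rightarrow> real" and q u v :: pt
  assumes sm: "smooth_on U F" and u: "u \<in> Basis" and v: "v \<in> Basis" and h: "h > 0"
    and sub: "\<And>r. dist r q \<le> 2 * h \<Longrightarrow> r \<in> U"
  shows "\<exists>r. dist r q \<le> 2 * h \<and>
     F (q + h *\<^sub>R v + h *\<^sub>R u) - F (q + h *\<^sub>R u) - F (q + h *\<^sub>R v) + F q
       = h * h * pd v (pd u F) r"
proof -
  have nu: "norm u = 1" "norm v = 1" using u v by auto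
  have dist1: "dist (q + a *\<^sub>R u + b *\<^sub>R v) q \<le> 2 * h"
    if "0 \<le> a" "a \<le> h" "0 \<le> b" "b \<le> h" for a b
  proof -
    have "dist (q + a *\<^sub>R u + b *\<^sub>R v) q = norm (a *\<^sub>R u + b *\<^sub>R v)"
      by (simp add: dist_norm)
    also have "\<dots> \<le> norm (a *\<^sub>R u) + norm (b *\<^sub>R v)" by (rule norm_triangle_ineq)
    also have "\<dots> = a + b" using that nu by simp
    finally show ?thesis using that by simp
  qed
  have smu: "smooth_on U (pd u F)" using smooth_pd[OF sm u] .
  define \<phi> where "\<phi> \<sigma> = F ((q + h *\<^sub>R v) + \<sigma> *\<^sub>R u) - F (q + \<sigma> *\<^sub>R u)" for \<sigma>
  have "\<exists>\<xi>. 0 < \<xi> \<and> \<xi> < h \<and> \<phi> h - \<phi> 0 = (h - 0) *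
          (pd u F ((q + h *\<^sub>R v) + \<xi> *\<^sub>R u) - pd u F (q + \<xi> *\<^sub>R u))"
  proof (rule MVT2[OF h])
    fix x assume x: "0 \<le> x" "x \<le> h"
    have in1: "(q + h *\<^sub>R v) + x *\<^sub>R u \<in> U"
      using sub dist1[of x h] x h by (simp add: algebra_simps)
    have in2: "q + x *\<^sub>R u \<in> U"
      using sub dist1[of x 0] x h by simp
    have d1: "((\<lambda>\<sigma>. F ((q + h *\<^sub>R v) + \<sigma> *\<^sub>R u)) has_field_derivative
               pd u F ((q + h *\<^sub>R v) + x *\<^sub>R u)) (at x)"
      by (rule HD_line, rule HD_sm[OF sm in1 u])
    have d2: "((\<lambda>\<sigma>. F (q + \<sigma> *\<^sub>R u)) has_field_derivative pd u F (q + x *\<^sub>R u)) (at x)"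
      by (rule HD_line, rule HD_sm[OF sm in2 u])
    show "(\<phi> has_real_derivative
           (\<lambda>\<xi>. pd u F ((q + h *\<^sub>R v) + \<xi> *\<^sub>R u) - pd u F (q + \<xi> *\<^sub>R u)) x) (at x)"
      unfolding \<phi>_def using DERIV_diff[OF d1 d2] by simp
  qed
  then obtain \<xi> where xi: "0 < \<xi>" "\<xi> < h" and
    e1: "\<phi> h - \<phi> 0 = h * (pd u F ((q + h *\<^sub>R v) + \<xi> *\<^sub>R u) - pd u F (q + \<xi> *\<^sub>R u))"
    by auto
  define \<psi> where "\<psi> \<tau> = pd u F ((q + \<xi> *\<^sub>R u) + \<tau> *\<^sub>R v)" for \<tau>
  have "\<exists>\<eta>. 0 < \<eta> \<and> \<eta> < h \<and> \<psi> h - \<psi> 0 = (h - 0) *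
          pd v (pd u F) ((q + \<xi> *\<^sub>R u) + \<eta> *\<^sub>R v)"
  proof (rule MVT2[OF h])
    fix x assume x: "0 \<le> x" "x \<le> h"
    have in1: "(q + \<xi> *\<^sub>R u) + x *\<^sub>R v \<in> U"
      using sub dist1[of \<xi> x] x xi by simp
    show "(\<psi> has_real_derivative (\<lambda>\<eta>. pd v (pd u F) ((q + \<xi> *\<^sub>R u) + \<eta> *\<^sub>R v)) x) (at x)"
      unfolding \<psi>_def by (rule HD_line, rule HD_sm[OF smu in1 v])
  qed
  then obtain \<eta> where eta: "0 < \<eta>" "\<eta> < h" and
    e2: "\<psi> h - \<psi> 0 = h * pd v (pd u F) ((q + \<xi> *\<^sub>R u) + \<eta> *\<^sub>R v)"
    by auto
  have "\<psi> h = pd u F ((q + h *\<^sub>R v) + \<xi> *\<^sub>R u)" "\<psi> 0 = pd u F (q + \<xi> *\<^sub>R u)"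
    unfolding \<psi>_def by (simp_all add: algebra_simps)
  with e1 e2 have "\<phi> h - \<phi> 0 = h * h * pd v (pd u F) ((q + \<xi> *\<^sub>R u) + \<eta> *\<^sub>R v)"
    by simp
  moreover have "\<phi> h - \<phi> 0 = F (q + h *\<^sub>R v + h *\<^sub>R u) - F (q + h *\<^sub>R u) - F (q + h *\<^sub>R v) + F q"
    unfolding \<phi>_def by simp
  moreover have "dist ((q + \<xi> *\<^sub>R u) + \<eta> *\<^sub>R v) q \<le> 2 * h"
    using dist1[of \<xi> \<eta>] xi eta by simp
  ultimately show ?thesis by metis
qed

lemma schwarz:
  fixes F :: "pt \<Rightarrow> real"
  assumes U: "open U" and sm: "smooth_on U F" and q: "q \<in> U" and u: "u \<in> Basis" and v: "v \<in> Basis"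
  shows "pd u (pd v F) q = pd v (pd u F) q"
proof -
  let ?A = "pd v (pd u F)" and ?B = "pd u (pd v F)"
  have cA: "isCont ?A q"
    using smooth_cont[OF smooth_pd[OF smooth_pd[OF sm u] v]] U q continuous_on_eq_continuous_at by blast
  have cB: "isCont ?B q"
    using smooth_cont[OF smooth_pd[OF smooth_pd[OF sm v] u]] U q continuous_on_eq_continuous_at by blast
  have "\<forall>e>0. \<bar>?A q - ?B q\<bar> < 2 * e"
  proof (intro allI impI)
    fix e :: real assume e: "e > 0" 
    show "\<bar>?A q - ?B q\<bar> < 2 * e"
  proof -
    obtain d1 where d1: "d1 > 0" "\<forall>r. dist r q < d1 \<longrightarrow> dist (?A r) (?A q) < e"
      using cA e unfolding continuous_at_eps_delta by blast
    obtain d2 where d2: "d2 > 0" "\<forall>r. dist r q < d2 \<longrightarrow> dist (?B r) (?B q) < e"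
      using cB e unfolding continuous_at_eps_delta by blast
    obtain d3 where d3: "d3 > 0" "ball q d3 \<subseteq> U" using U q open_contains_ball by blast
    define h where "h = min d1 (min d2 d3) / 3"
    have h: "h > 0" using d1 d2 d3 by (simp add: h_def)
    have hd: "2 * h < d1" "2 * h < d2" "2 * h < d3" using d1 d2 d3 by (auto simp: h_def)
    have sub: "r \<in> U" if "dist r q \<le> 2 * h" for r
      using d3 hd that by (auto simp: dist_commute)
    obtain r1 where r1: "dist r1 q \<le> 2 * h"
      "F (q + h *\<^sub>R v + h *\<^sub>R u) - F (q + h *\<^sub>R u) - F (q + h *\<^sub>R v) + F q = h * h * ?A r1"
      using schwarz_aux[OF sm u v h sub] by blast
    obtain r2 where r2: "dist r2 q \<le> 2 * h"
      "F (q + h *\<^sub>R u + h *\<^sub>R v) - F (q + h *\<^sub>R v) - F (q + h *\<^sub>R u) + F q = h * h * ?B r2"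
      using schwarz_aux[OF sm v u h sub] by blast
    have eqp: "q + h *\<^sub>R u + h *\<^sub>R v = q + h *\<^sub>R v + h *\<^sub>R u" by (simp add: algebra_simps)
    have "h * h * ?A r1 = h * h * ?B r2" using r1(2) r2(2)[unfolded eqp] by linarith
    then have AB: "?A r1 = ?B r2" using h by simp
    have "dist r1 q < d1" using r1(1) hd by linarith
    then have c1: "dist (?A r1) (?A q) < e" using d1(2) by blast
    have "dist r2 q < d2" using r2(1) hd by linarith
    then have c2: "dist (?B r2) (?B q) < e" using d2(2) by blast
    show ?thesis using AB c1 c2 by (simp add: dist_real_def)
  qed
  qed
  then have "?A q = ?B q"
  proof (rule contrapos_pp)
    assume ne: "?A q \<noteq> ?B q"
    then have "\<bar>?A q - ?B q\<bar> / 4 > 0" by simp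
    then show "\<not> (\<forall>e>0. \<bar>?A q - ?B q\<bar> < 2 * e)"
      by (intro notI) (drule spec[of _ "\<bar>?A q - ?B q\<bar> / 4"], simp)
  qed
  then show ?thesis by simp
qed


lemma yc_add: "yc i (q + h *\<^sub>R v) = yc i q + h * yc i v"
  by (cases q; cases v) (auto simp: yc_def)

lemma yc_Yd[simp]: "yc i (Yd j) = (if (i = 1) = (j = 1) then 1 else 0)"
  by (auto simp: yc_def Yd_def)

lemma yc_Xd[simp]: "yc i (Xd j) = 0"
  by (auto simp: yc_def Xd_def)

lemma HD_yc: "HD v (yc i) q (yc i v)"
  unfolding HD_def yc_add by (auto intro!: derivative_eq_intros)

definition Om :: "pt set" where "Om = {q. yc 1 q \<noteq> 0 \<and> yc 2 q \<noteq> 0}"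

lemma cont_yc: "continuous_on UNIV (yc i)"
  unfolding yc_def[abs_def] by (cases "i = 1") (auto intro!: continuous_intros)

lemma open_Om: "open Om"
  unfolding Om_def
  by (intro open_Collect_conj open_Collect_neq cont_yc continuous_on_const)

type_synonym mn = "real \<times> int \<times> int"

fun ev :: "mn \<Rightarrow> pt \<Rightarrow> real" where
  "ev (c, e1, e2) q = c * yc 1 q powi e1 * yc 2 q powi e2"

fun dM :: "nat \<Rightarrow> mn \<Rightarrow> mn" where
  "dM i (c, e1, e2) = (if i = 1 then (c * of_int e1, e1 - 1, e2) else (c * of_int e2, e1, e2 - 1))"

fun smul :: "real \<Rightarrow> mn \<Rightarrow> mn" where
  "smul d (c, e1, e2) = (d * c, e1, e2)"

lemma HD_ev_Y:
  assumes "q \<in> Om"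
  shows "HD (Yd i) (ev M) q (ev (dM i M) q)"
proof -
  obtain c e1 e2 where M: "M = (c, e1, e2)" by (cases M) auto
  have y: "yc 1 q \<noteq> 0" "yc 2 q \<noteq> 0" using assms by (auto simp: Om_def)
  show ?thesis
  proof (cases "i = 1")
    case True
    have "((\<lambda>h. c * (yc 1 q + h) powi e1 * yc 2 q powi e2) has_field_derivative
           c * (of_int e1 * (yc 1 q + 0) powi (e1 - 1) * 1) * yc 2 q powi e2) (at 0)"
      using y by (auto intro!: derivative_eq_intros)
    then show ?thesis using True unfolding HD_def M by (simp add: yc_add mult_ac)
  next
    case False
    have "((\<lambda>h. c * yc 1 q powi e1 * (yc 2 q + h) powi e2) has_field_derivative
           c * yc 1 q powi e1 * (of_int e2 * (yc 2 q + 0) powi (e2 - 1) * 1)) (at 0)"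
      using y by (auto intro!: derivative_eq_intros)
    then show ?thesis using False unfolding HD_def M by (simp add: yc_add mult_ac)
  qed
qed

lemma HD_ev_X: "HD (Xd i) (ev M) q 0"
proof -
  obtain c e1 e2 where M: "M = (c, e1, e2)" by (cases M) auto
  show ?thesis unfolding HD_def M by (simp add: yc_add)
qed

lemma pd_ev_Y: "q \<in> Om \<Longrightarrow> pd (Yd i) (ev M) q = ev (dM i M) q"
  by (rule pd_HD[OF HD_ev_Y])

lemma pd_local_ev:
  assumes "\<forall>r\<in>Om. F r = ev M r" "q \<in> Om"
  shows "pd (Yd i) F q = ev (dM i M) q"
  using pd_local[OF open_Om assms(2) assms(1)] pd_ev_Y[OF assms(2)] by simp

lemma ev_smul[simp]: "ev (smul d M) q = d * ev M q"
  by (cases M) auto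

lemma dM_smul[simp]: "dM i (smul d M) = smul d (dM i M)"
  by (cases M) auto

lemma euler:
  assumes "q \<in> Om" "M = (c, e1, e2)"
  shows "yc 1 q * ev (dM 1 M) q + yc 2 q * ev (dM 2 M) q = of_int (e1 + e2) * ev M q"
proof -
  have y: "yc 1 q \<noteq> 0" "yc 2 q \<noteq> 0" using assms by (auto simp: Om_def)
  have p: "z * z powi (e - 1) = z powi e" if "z \<noteq> 0" for z :: real and e
    using power_int_add[of z "e - 1" 1] that by (simp add: mult.commute)
  have e1: "yc 1 q * (c * of_int e1 * yc 1 q powi (e1 - 1) * yc 2 q powi e2)
      = c * of_int e1 * (yc 1 q * yc 1 q powi (e1 - 1)) * yc 2 q powi e2" by (simp add: mult_ac)
  have e2: "yc 2 q * (c * of_int e2 * yc 1 q powi e1 * yc 2 q powi (e2 - 1))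
      = c * of_int e2 * yc 1 q powi e1 * (yc 2 q * yc 2 q powi (e2 - 1))" by (simp add: mult_ac)
  have "yc 1 q * ev (dM 1 M) q + yc 2 q * ev (dM 2 M) q =
     c * of_int e1 * (yc 1 q * yc 1 q powi (e1 - 1)) * yc 2 q powi e2 +
     c * of_int e2 * yc 1 q powi e1 * (yc 2 q * yc 2 q powi (e2 - 1))"
    unfolding assms using e1 e2 by simp
  also have "\<dots> = of_int (e1 + e2) * ev M q"
    unfolding p[OF y(1)] p[OF y(2)] assms by (simp add: algebra_simps)
  finally show ?thesis .
qed


definition fM :: "real \<Rightarrow> real \<Rightarrow> nat \<Rightarrow> nat \<Rightarrow> nat \<Rightarrow> mn" where
  "fM a b s t l = (if l = 1 then (a, 2 - int t, int t) else (b, 2 - int s, int s))"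

lemma fsp_ev: "fsp a b s t l = ev (fM a b s t l)"
  by (rule ext) (simp add: fsp_def fM_def)

definition G1M :: "real \<Rightarrow> real \<Rightarrow> nat \<Rightarrow> nat \<Rightarrow> nat \<Rightarrow> nat \<Rightarrow> mn" where
  "G1M a b s t l i = smul (-1/2) (dM i (fM a b s t l))"

lemma Gam1_ev: "q \<in> Om \<Longrightarrow> Gam1 (fsp a b s t) l i q = ev (G1M a b s t l i) q"
  unfolding Gam1_def G1M_def fsp_ev by (simp add: pd_ev_Y)

lemma Gam2_ev: "q \<in> Om \<Longrightarrow> Gam2 (fsp a b s t) l i k q = ev (dM k (G1M a b s t l i)) q"
  unfolding Gam2_def by (rule pd_local_ev) (auto simp: Gam1_ev)

lemma G3_ev: "q \<in> Om \<Longrightarrow> pd (Yd k) (Gam2 (fsp a b s t) l i j) q = ev (dM k (dM j (G1M a b s t l i))) q"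
  by (rule pd_local_ev) (auto simp: Gam2_ev)

lemma Berwald_ev: "q \<in> Om \<Longrightarrow> Berwald (fsp a b s t) i j k l q = -(1/2) * ev (dM i (dM j (dM k (fM a b s t l)))) q"
proof -
  assume q: "q \<in> Om"
  have 1: "\<forall>r\<in>Om. pd (Yd k) (fsp a b s t l) r = ev (dM k (fM a b s t l)) r"
    by (simp add: fsp_ev pd_ev_Y)
  have 2: "\<forall>r\<in>Om. pd (Yd j) (pd (Yd k) (fsp a b s t l)) r = ev (dM j (dM k (fM a b s t l))) r"
    using pd_local_ev[OF 1] by blast
  show ?thesis unfolding Berwald_def using pd_local_ev[OF 2 q] by simp
qed

lemma euler':
  assumes "q \<in> Om"
  shows "yc 1 q * ev (dM 1 M) q + yc 2 q * ev (dM 2 M) q = of_int (fst (snd M) + snd (snd M)) * ev M q"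
  using euler[OF assms, of M "fst M" "fst (snd M)" "snd (snd M)"] by simp

lemma G1M_deg: "l \<in> {1,2} \<Longrightarrow> i \<in> {1,2} \<Longrightarrow> fst (snd (G1M a b s t l i)) + snd (snd (G1M a b s t l i)) = 1"
  by (auto simp: G1M_def fM_def)

lemma euler_G1:
  assumes "q \<in> Om" "l \<in> {1,2}" "i \<in> {1,2}"
  shows "yc 1 q * ev (dM 1 (G1M a b s t l i)) q + yc 2 q * ev (dM 2 (G1M a b s t l i)) q = ev (G1M a b s t l i) q"
  using euler'[OF assms(1), of "G1M a b s t l i"] G1M_deg[OF assms(2,3)] by simp

lemma gmet_eq: "gmet E i j = pd (Yd i) (pd (Yd j) E)"
  by (rule ext) (simp add: gmet_def)

lemma one_in: "(1::nat) \<in> {1,2}" by simp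
lemma two_in: "(2::nat) \<in> {1,2}" by simp

lemma HD_zero':
  assumes "open U" "q \<in> U" "\<forall>r\<in>U. F r = 0" "HD v F q D" "D = D'"
  shows "D' = 0"
  using HD_zero[OF assms(1-4)] assms(5) by simp

lemma HD_eq: "HD v F q D \<Longrightarrow> D = D' \<Longrightarrow> HD v F q D'" by simp

locale S =
  fixes a b :: real and s t :: nat and U :: "pt set" and E :: "pt \<Rightarrow> real"
  assumes U: "open U" and UOm: "U \<subseteq> Om" and sm: "smooth_on U E"
    and H: "cond_H U E" and Ls: "cond_Ls U (fsp a b s t) E" and PD: "pos_def_g U E"
begin

lemma sm1: "w \<in> Basis \<Longrightarrow> smooth_on U (pd w E)" using smooth_pd[OF sm] .
lemma sm2: "w \<in> Basis \<Longrightarrow> w' \<in> Basis \<Longrightarrow> smooth_on U (pd w (pd w' E))" using smooth_pd[OF sm1] .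

lemma HD_E0: "q \<in> U \<Longrightarrow> v \<in> Basis \<Longrightarrow> HD v E q (pd v E q)"
  using HD_sm[OF sm] .
lemma HD_E1: "q \<in> U \<Longrightarrow> v \<in> Basis \<Longrightarrow> w \<in> Basis \<Longrightarrow> HD v (pd w E) q (pd v (pd w E) q)"
  using HD_sm[OF sm1] .
lemma HD_E2: "q \<in> U \<Longrightarrow> v \<in> Basis \<Longrightarrow> w \<in> Basis \<Longrightarrow> w' \<in> Basis \<Longrightarrow>
   HD v (pd w (pd w' E)) q (pd v (pd w (pd w' E)) q)"
  using HD_sm[OF sm2] .

lemmas HDI = HD_add HD_diff HD_mult HD_const HD_yc HD_ev_X HD_ev_Y HD_E0 HD_E1 HD_E2 Xd_Basis Yd_Basis

lemma qOm: "q \<in> U \<Longrightarrow> q \<in> Om" using UOm by auto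

lemma sch: "q \<in> U \<Longrightarrow> u \<in> Basis \<Longrightarrow> v \<in> Basis \<Longrightarrow> pd u (pd v E) q = pd v (pd u E) q"
  using schwarz[OF U sm] by blast
lemma sch1: "q \<in> U \<Longrightarrow> u \<in> Basis \<Longrightarrow> v \<in> Basis \<Longrightarrow> w \<in> Basis \<Longrightarrow>
   pd u (pd v (pd w E)) q = pd v (pd u (pd w E)) q"
  using schwarz[OF U sm1] by blast

lemma S1: "\<forall>r\<in>U. yc 1 r * pd (Yd 1) E r + yc 2 r * pd (Yd 2) E r - 2 * E r = 0"
  using H unfolding cond_H_def by simp

lemma S2:
  assumes q: "q \<in> U" and k: "k \<in> {1,2}"
  shows "yc 1 q * pd (Yd k) (pd (Yd 1) E) q + yc 2 q * pd (Yd k) (pd (Yd 2) E) q - pd (Yd k) E q = 0"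
  apply (rule HD_zero'[OF U q S1, where v = "Yd k"])
   apply ((rule HDI q qOm[OF q])+)
  using k by auto

lemma S2all: "k \<in> {1,2} \<Longrightarrow> \<forall>r\<in>U. yc 1 r * pd (Yd k) (pd (Yd 1) E) r + yc 2 r * pd (Yd k) (pd (Yd 2) E) r - pd (Yd k) E r = 0"
  using S2 by blast

lemma S3:
  assumes q: "q \<in> U" and j: "j \<in> {1,2}"
  shows "yc 1 q * pd (Xd i) (pd (Yd j) (pd (Yd 1) E)) q + yc 2 q * pd (Xd i) (pd (Yd j) (pd (Yd 2) E)) q
     - pd (Xd i) (pd (Yd j) E) q = 0"
  apply (rule HD_zero'[OF U q S2all[OF j], where v = "Xd i"])
   apply ((rule HDI q qOm[OF q])+)
  by auto

lemma S4:
  assumes q: "q \<in> U" and j: "j \<in> {1,2}" and l: "l \<in> {1,2}"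
  shows "yc 1 q * pd (Yd l) (pd (Yd j) (pd (Yd 1) E)) q + yc 2 q * pd (Yd l) (pd (Yd j) (pd (Yd 2) E)) q = 0"
  apply (rule HD_zero'[OF U q S2all[OF j], where v = "Yd l"])
   apply ((rule HDI q qOm[OF q])+)
  using l j sch[OF q] by auto

lemma HX:
  assumes q: "q \<in> U"
  shows "yc 1 q * pd (Xd i) (pd (Yd 1) E) q + yc 2 q * pd (Xd i) (pd (Yd 2) E) q - 2 * pd (Xd i) E q = 0"
  apply (rule HD_zero'[OF U q S1, where v = "Xd i"])
   apply ((rule HDI q qOm[OF q])+)
  by auto

abbreviation "G1 \<equiv> G1M a b s t"

lemma LsI:
  assumes q: "q \<in> U" and ijk: "i \<in> {1,2}" "j \<in> {1,2}" "k \<in> {1,2}"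
  shows "pd (Xd i) (pd (Yd j) (pd (Yd k) E)) q
     - (ev (G1 1 i) q * pd (Yd 1) (pd (Yd j) (pd (Yd k) E)) q + ev (G1 2 i) q * pd (Yd 2) (pd (Yd j) (pd (Yd k) E)) q)
     - (ev (dM k (G1 1 i)) q * pd (Yd 1) (pd (Yd j) E) q + ev (dM k (G1 2 i)) q * pd (Yd 2) (pd (Yd j) E) q)
     - (ev (dM j (G1 1 i)) q * pd (Yd 1) (pd (Yd k) E) q + ev (dM j (G1 2 i)) q * pd (Yd 2) (pd (Yd k) E) q) = 0"
proof -
  have "pd (Xd i) (gmet E j k) q
    - (\<Sum>l\<in>{1,2::nat}. Gam1 (fsp a b s t) l i q * pd (Yd l) (gmet E j k) q)
    - (\<Sum>l\<in>{1,2::nat}. Gam2 (fsp a b s t) l i k q * gmet E l j q)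
    - (\<Sum>l\<in>{1,2::nat}. Gam2 (fsp a b s t) l i j q * gmet E l k q) = 0"
    using Ls q ijk unfolding cond_Ls_def by blast
  then show ?thesis using qOm[OF q] by (simp add: gmet_eq Gam1_ev Gam2_ev)
qed

lemma LsC:
  assumes q: "q \<in> U" and ij: "i \<in> {1,2}" "j \<in> {1,2}"
  shows "pd (Xd i) (pd (Yd j) E) q
     - (ev (G1 1 i) q * pd (Yd 1) (pd (Yd j) E) q + ev (G1 2 i) q * pd (Yd 2) (pd (Yd j) E) q)
     - (ev (dM j (G1 1 i)) q * pd (Yd 1) E q + ev (dM j (G1 2 i)) q * pd (Yd 2) E q) = 0"
proof -
  note L1 = LsI[OF q ij one_in] and L2 = LsI[OF q ij two_in]
  note A = S3[OF q ij(2), of i] S4[OF q ij(2) one_in] S4[OF q ij(2) two_in]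
    S2[OF q one_in] S2[OF q two_in]
    euler_G1[OF qOm[OF q] one_in ij(1), of a b s t] euler_G1[OF qOm[OF q] two_in ij(1), of a b s t]
  show ?thesis using L1 L2 A by algebra
qed

lemma Dx:
  assumes q: "q \<in> U" and i: "i \<in> {1,2}"
  shows "pd (Xd i) E q - (ev (G1 1 i) q * pd (Yd 1) E q + ev (G1 2 i) q * pd (Yd 2) E q) = 0"
proof -
  note A = LsC[OF q i one_in] LsC[OF q i two_in] HX[OF q, of i] S2[OF q one_in] S2[OF q two_in]
    euler_G1[OF qOm[OF q] one_in i, of a b s t] euler_G1[OF qOm[OF q] two_in i, of a b s t]
  show ?thesis using A by algebra
qed

lemma LsCall: "\<forall>r\<in>U. pd (Xd 2) (pd (Yd 2) E) r
     - (ev (G1 1 2) r * pd (Yd 1) (pd (Yd 2) E) r + ev (G1 2 2) r * pd (Yd 2) (pd (Yd 2) E) r)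
     - (ev (dM 2 (G1 1 2)) r * pd (Yd 1) E r + ev (dM 2 (G1 2 2)) r * pd (Yd 2) E r) = 0"
  using LsC[OF _ two_in two_in] by blast

lemma Lands0:
  assumes q: "q \<in> U"
  shows "- (ev (dM 2 (dM 2 (G1 1 2))) q * pd (Yd 1) E q + ev (dM 2 (dM 2 (G1 2 2))) q * pd (Yd 2) E q) = 0"
  apply (rule HD_zero'[OF U q LsCall, where v = "Yd 2"])
   apply ((rule HDI q qOm[OF q])+)
  using LsI[OF q two_in two_in two_in] sch1[OF q Yd_Basis Xd_Basis Yd_Basis, of 2 2 2]
     sch1[OF q Yd_Basis Yd_Basis Yd_Basis, of 2 1 2] sch1[OF q Yd_Basis Yd_Basis Yd_Basis, of 2 2 2]
     sch[OF q Yd_Basis Yd_Basis, of 2 1]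
  by simp

lemma Lands:
  assumes q: "q \<in> U"
  shows "ev (dM 2 (dM 2 (G1 1 2))) q * pd (Yd 1) E q + ev (dM 2 (dM 2 (G1 2 2))) q * pd (Yd 2) E q = 0"
  using Lands0[OF q] by linarith

end


lemma c1M_eq: "dM 2 (dM 2 (G1M a b s t 1 2)) = (-1/2 * a * real t * (real t - 1) * (real t - 2), 2 - int t, int t - 3)"
  by (simp add: G1M_def fM_def algebra_simps)

lemma c2M_eq: "dM 2 (dM 2 (G1M a b s t 2 2)) = (-1/2 * b * real s * (real s - 1) * (real s - 2), 2 - int s, int s - 3)"
  by (simp add: G1M_def fM_def algebra_simps)

lemma ev_nz: "q \<in> Om \<Longrightarrow> c \<noteq> 0 \<Longrightarrow> ev (c, e1, e2) q \<noteq> 0"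
  by (auto simp: Om_def)

lemma ev_zero: "ev (0, e1, e2) q = 0" by simp

context S
begin

lemma PDq:
  assumes q: "q \<in> U" and ab: "(\<alpha>, \<beta>) \<noteq> (0, 0)"
  shows "\<alpha> * \<alpha> * pd (Yd 1) (pd (Yd 1) E) q + \<alpha> * \<beta> * pd (Yd 1) (pd (Yd 2) E) q
       + \<beta> * \<alpha> * pd (Yd 2) (pd (Yd 1) E) q + \<beta> * \<beta> * pd (Yd 2) (pd (Yd 2) E) q > 0"
proof -
  let ?v = "\<lambda>i::nat. if i = 1 then \<alpha> else \<beta>"
  have A: "\<forall>v. (v 1, v 2) \<noteq> (0::real, 0::real) \<longrightarrow>
     0 < (\<Sum>i\<in>{1,2::nat}. \<Sum>j\<in>{1,2::nat}. gmet E i j q * v i * v j)"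
    using PD q unfolding pos_def_g_def by blast
  have "0 < (\<Sum>i\<in>{1,2::nat}. \<Sum>j\<in>{1,2::nat}. gmet E i j q * ?v i * ?v j)"
    by (rule A[rule_format, of ?v]) (use ab in simp)
  then show ?thesis by (simp add: gmet_eq algebra_simps)
qed

lemma Lin:
  assumes q: "q \<in> U" and ab: "(\<alpha>, \<beta>) \<noteq> (0, 0)"
    and L: "\<forall>r\<in>U. \<alpha> * pd (Yd 1) E r + \<beta> * pd (Yd 2) E r = 0"
  shows False
proof -
  have 1: "\<alpha> * pd (Yd 1) (pd (Yd 1) E) q + \<beta> * pd (Yd 1) (pd (Yd 2) E) q = 0"
    apply (rule HD_zero'[OF U q L, where v = "Yd 1"])
     apply ((rule HDI q qOm[OF q])+)
    by simp
  have 2: "\<alpha> * pd (Yd 2) (pd (Yd 1) E) q + \<beta> * pd (Yd 2) (pd (Yd 2) E) q = 0"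
    apply (rule HD_zero'[OF U q L, where v = "Yd 2"])
     apply ((rule HDI q qOm[OF q])+)
    by simp
  have "\<alpha> * (\<alpha> * pd (Yd 1) (pd (Yd 1) E) q + \<beta> * pd (Yd 1) (pd (Yd 2) E) q)
      + \<beta> * (\<alpha> * pd (Yd 2) (pd (Yd 1) E) q + \<beta> * pd (Yd 2) (pd (Yd 2) E) q) > 0"
    using PDq[OF q ab] by (simp add: algebra_simps)
  then show False using 1 2 by simp
qed

lemma Epos:
  assumes q: "q \<in> U"
  shows "E q > 0"
proof -
  have nz: "(yc 1 q, yc 2 q) \<noteq> (0, 0)" using qOm[OF q] by (auto simp: Om_def)
  have "yc 1 q * (yc 1 q * pd (Yd 1) (pd (Yd 1) E) q + yc 2 q * pd (Yd 1) (pd (Yd 2) E) q)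
      + yc 2 q * (yc 1 q * pd (Yd 2) (pd (Yd 1) E) q + yc 2 q * pd (Yd 2) (pd (Yd 2) E) q) > 0"
    using PDq[OF q nz] by (simp add: algebra_simps)
  then show ?thesis using S2[OF q one_in] S2[OF q two_in] S1 q by auto
qed

abbreviation "C1 \<equiv> -1/2 * a * real t * (real t - 1) * (real t - 2)"
abbreviation "C2 \<equiv> -1/2 * b * real s * (real s - 1) * (real s - 2)"

lemma Lands': "q \<in> U \<Longrightarrow> ev (C1, 2 - int t, int t - 3) q * pd (Yd 1) E q + ev (C2, 2 - int s, int s - 3) q * pd (Yd 2) E q = 0"
  using Lands c1M_eq c2M_eq by metis

lemma caseA:
  assumes "p \<in> U" "C2 = 0" "C1 \<noteq> 0"
  shows False
proof -
  have "\<forall>r\<in>U. 1 * pd (Yd 1) E r + 0 * pd (Yd 2) E r = 0"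
  proof
    fix r assume r: "r \<in> U"
    have z: "ev (C2, 2 - int s, int s - 3) r = ev (0, 2 - int s, int s - 3) r" by (simp only: assms(2))
    have "ev (C1, 2 - int t, int t - 3) r * pd (Yd 1) E r = 0" using Lands'[OF r] unfolding z by (simp del: ev.simps add: ev_zero)
    then show "1 * pd (Yd 1) E r + 0 * pd (Yd 2) E r = 0" using ev_nz[OF qOm[OF r] assms(3)] by (simp del: ev.simps)
  qed
  then show False by (rule Lin[OF assms(1), rotated]) simp
qed

lemma caseB:
  assumes "p \<in> U" "C1 = 0" "C2 \<noteq> 0"
  shows False
proof -
  have "\<forall>r\<in>U. 0 * pd (Yd 1) E r + 1 * pd (Yd 2) E r = 0"
  proof
    fix r assume r: "r \<in> U"
    have z: "ev (C1, 2 - int t, int t - 3) r = ev (0, 2 - int t, int t - 3) r" by (simp only: assms(2))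
    have "ev (C2, 2 - int s, int s - 3) r * pd (Yd 2) E r = 0" using Lands'[OF r] unfolding z by (simp del: ev.simps add: ev_zero)
    then show "0 * pd (Yd 1) E r + 1 * pd (Yd 2) E r = 0" using ev_nz[OF qOm[OF r] assms(3)] by (simp del: ev.simps)
  qed
  then show False by (rule Lin[OF assms(1), rotated]) simp
qed

lemma caseC:
  assumes "p \<in> U" "C1 \<noteq> 0" "C2 \<noteq> 0" "s = t"
  shows False
proof -
  have "\<forall>r\<in>U. 1 * pd (Yd 1) E r + (C2 / C1) * pd (Yd 2) E r = 0"
  proof
    fix r assume r: "r \<in> U"
    have e: "ev (C2, 2 - int s, int s - 3) r = (C2 / C1) * ev (C1, 2 - int t, int t - 3) r"
      using assms(2,4) by simp
    have "ev (C1, 2 - int t, int t - 3) r * (pd (Yd 1) E r + (C2 / C1) * pd (Yd 2) E r) = 0"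
      using Lands'[OF r] unfolding e by (simp del: ev.simps add: algebra_simps)
    then show "1 * pd (Yd 1) E r + (C2 / C1) * pd (Yd 2) E r = 0" using ev_nz[OF qOm[OF r] assms(2)] by (simp del: ev.simps)
  qed
  then show False by (rule Lin[OF assms(1), rotated]) simp
qed

end


definition RMk :: "real \<Rightarrow> nat \<Rightarrow> nat \<Rightarrow> mn" where
  "RMk kk s t = (-kk, int t - int s, int s - int t)"

fun evm :: "mn \<Rightarrow> real \<Rightarrow> real \<Rightarrow> real" where
  "evm (c, e1, e2) x y = c * x powi e1 * y powi e2"

lemma ev_evm: "ev M q = evm M (yc 1 q) (yc 2 q)"
  by (cases M) simp

definition PhiR :: "real \<Rightarrow> real \<Rightarrow> nat \<Rightarrow> nat \<Rightarrow> real \<Rightarrow> nat \<Rightarrow> real \<Rightarrow> real \<Rightarrow> real" where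
  "PhiR a b s t kk i x y =
     evm (dM 1 (G1M a b s t 1 i)) x y * evm (RMk kk s t) x y + evm (G1M a b s t 1 i) x y * evm (dM 1 (RMk kk s t)) x y
   + evm (dM 1 (G1M a b s t 2 i)) x y + evm (G1M a b s t 2 i) x y * evm (dM 2 (RMk kk s t)) x y
   - evm (RMk kk s t) x y * evm (RMk kk s t) x y * evm (dM 2 (G1M a b s t 1 i)) x y
   - evm (RMk kk s t) x y * evm (dM 2 (G1M a b s t 2 i)) x y"

lemma Phi1:
  assumes x: "x \<noteq> 0" and y: "y \<noteq> 0"
  shows "PhiR a b s t kk 1 x y = ((a * kk * (2 - real t) - b * (2 - real s)) / 2) * (y^s / x^s)
          * ((1 - real s) + kk * real t * (x * x^t * y^s / (y * x^s * y^t)))"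
    unfolding PhiR_def RMk_def G1M_def fM_def
    using x y
    apply (simp add: power_int_diff power_int_add power_int_minus)
    apply (simp add: field_simps)
    done

lemma Phi2:
  assumes x: "x \<noteq> 0" and y: "y \<noteq> 0"
  shows "PhiR a b s t kk 2 x y = ((a * kk * real t - b * real s) / 2) * (x * y^s / (x^s * y))
          * ((2 - real s) + kk * (real t - 1) * (x * x^t * y^s / (y * x^s * y^t)))"
    unfolding PhiR_def RMk_def G1M_def fM_def
    using x y
    apply (simp add: power_int_diff power_int_add power_int_minus)
    apply (simp add: field_simps)
    apply algebra
    done

lemma rho_eq:
  assumes x: "x \<noteq> 0" and y: "y \<noteq> 0"
  shows "x * evm (RMk kk s t) x y + y = y * (1 - kk * (x * x^t * y^s / (y * x^s * y^t)))"
  unfolding RMk_def using x y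
  apply (simp add: power_int_diff power_int_add power_int_minus)
  apply (simp add: field_simps)
  done

lemma final_alg:
  assumes x: "x \<noteq> 0" and y: "y \<noteq> 0"
    and K1: "a * kk * (2 - real t) - b * (2 - real s) \<noteq> 0"
    and K2: "a * kk * real t - b * real s \<noteq> 0"
    and P1: "PhiR a b s t kk 1 x y = 0" and P2: "PhiR a b s t kk 2 x y = 0"
    and R: "x * evm (RMk kk s t) x y + y \<noteq> 0"
  shows False
proof -
  define R where "R = x * x^t * y^s / (y * x^s * y^t)"
  have q1: "(1 - real s) + kk * real t * R = 0"
    using P1 unfolding Phi1[OF x y] R_def[symmetric] using K1 x y by simp
  have q2: "(2 - real s) + kk * (real t - 1) * R = 0"
    using P2 unfolding Phi2[OF x y] R_def[symmetric] using K2 x y by simp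
  have "kk * R = 1" using q1 q2 by (simp add: algebra_simps)
  then show False using R unfolding rho_eq[OF x y] R_def[symmetric] by simp
qed

lemma Kne:
  fixes a b kk :: real and s t :: nat
  assumes C1: "-1/2 * a * real t * (real t - 1) * (real t - 2) \<noteq> 0"
    and C2: "-1/2 * b * real s * (real s - 1) * (real s - 2) \<noteq> 0"
    and kk: "kk * (-1/2 * a * real t * (real t - 1) * (real t - 2)) = -1/2 * b * real s * (real s - 1) * (real s - 2)"
    and st: "s \<noteq> t"
  shows "a * kk * (2 - real t) - b * (2 - real s) \<noteq> 0" "a * kk * real t - b * real s \<noteq> 0"
proof -
  have a: "a \<noteq> 0" and b: "b \<noteq> 0" using C1 C2 by auto
  have t: "real t \<ge> 3" using C1 by (cases "t \<ge> 3") (auto simp: not_le less_Suc_eq numeral_3_eq_3)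
  have s: "real s \<ge> 3" using C2 by (cases "s \<ge> 3") (auto simp: not_le less_Suc_eq numeral_3_eq_3)
  have ST: "real s \<noteq> real t" using st by simp
  show "a * kk * (2 - real t) - b * (2 - real s) \<noteq> 0"
  proof
    assume h: "a * kk * (2 - real t) - b * (2 - real s) = 0"
    have "a * b * (real s - 2) * (real t - 2) * ((real s - real t) * (real s + real t - 1)) = 0"
      using h kk by algebra
    then show False using a b s t ST by auto
  qed
  show "a * kk * real t - b * real s \<noteq> 0"
  proof
    assume h: "a * kk * real t - b * real s = 0"
    have "a * b * real s * real t * ((real s - real t) * (real s + real t - 3)) = 0"
      using h kk by algebra
    then show False using a b s t ST by auto
  qed
qed


lemma coefz:
  assumes "a = 0 \<or> t = 0 \<or> t = 1 \<or> t = 2" "i \<in> {1,2}" "j \<in> {1,2}" "k \<in> {1,2}"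
  shows "fst (dM i (dM j (dM k (a, 2 - int t, int t)))) = 0"
  using assms by auto

lemma ev_fst0: "fst M = 0 \<Longrightarrow> ev M q = 0"
  by (cases M) auto

lemma C_zero_iff: "-1/2 * a * real t * (real t - 1) * (real t - 2) = 0 \<Longrightarrow> a = 0 \<or> t = 0 \<or> t = 1 \<or> t = 2"
  by auto

lemma Berwald_zero:
  assumes C1: "-1/2 * a * real t * (real t - 1) * (real t - 2) = 0"
    and C2: "-1/2 * b * real s * (real s - 1) * (real s - 2) = 0"
    and q: "q \<in> Om" and ijkl: "i \<in> {1,2}" "j \<in> {1,2}" "k \<in> {1,2}" "l \<in> {1,2}"
  shows "Berwald (fsp a b s t) i j k l q = 0"
proof -
  have "fst (dM i (dM j (dM k (fM a b s t l)))) = 0"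
  proof (cases "l = 1")
    case True
    then show ?thesis using coefz[OF C_zero_iff[OF C1] ijkl(1-3)] by (simp add: fM_def)
  next
    case False
    then show ?thesis using coefz[OF C_zero_iff[OF C2] ijkl(1-3)] by (simp add: fM_def)
  qed
  then show ?thesis using Berwald_ev[OF q] ev_fst0 by simp
qed

context S
begin

lemma caseD:
  assumes p: "p \<in> U" and C1: "C1 \<noteq> 0" and C2: "C2 \<noteq> 0" and st: "s \<noteq> t"
  shows False
proof -
  define kk where "kk = C2 / C1"
  define RM where "RM = RMk kk s t"
  have kkC: "kk * C1 = C2" using C1 by (simp add: kk_def)
  have mulc: "ev RM r * ev (C1, 2 - int t, int t - 3) r = - ev (C2, 2 - int s, int s - 3) r"
    if r: "r \<in> Om" for r
  proof -
    have x: "yc 1 r \<noteq> 0" and y: "yc 2 r \<noteq> 0" using r by (auto simp: Om_def)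
    show ?thesis unfolding RM_def RMk_def ev.simps kkC[symmetric]
      using x y
      apply (simp add: power_int_diff power_int_add power_int_minus)
      apply (simp add: field_simps)
      done
  qed
  have Rel: "\<forall>r\<in>U. pd (Yd 1) E r - ev RM r * pd (Yd 2) E r = 0"
  proof
    fix r assume r: "r \<in> U"
    have "ev (C1, 2 - int t, int t - 3) r * (pd (Yd 1) E r - ev RM r * pd (Yd 2) E r) = 0"
      using Lands'[OF r] mulc[OF qOm[OF r]] by algebra
    then show "pd (Yd 1) E r - ev RM r * pd (Yd 2) E r = 0"
      using ev_nz[OF qOm[OF r] C1] by (simp del: ev.simps)
  qed
  have RX: "pd (Xd i) (pd (Yd 1) E) p - ev RM p * pd (Xd i) (pd (Yd 2) E) p = 0" for i
    apply (rule HD_zero'[OF U p Rel, where v = "Xd i"])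
     apply ((rule HDI p qOm[OF p])+)
    by (simp del: ev.simps)
  have R1: "pd (Yd 1) (pd (Yd 1) E) p - (ev (dM 1 RM) p * pd (Yd 2) E p + ev RM p * pd (Yd 1) (pd (Yd 2) E) p) = 0"
    apply (rule HD_zero'[OF U p Rel, where v = "Yd 1"])
     apply ((rule HDI p qOm[OF p])+)
    by (simp del: ev.simps)
  have R2: "pd (Yd 2) (pd (Yd 1) E) p - (ev (dM 2 RM) p * pd (Yd 2) E p + ev RM p * pd (Yd 2) (pd (Yd 2) E) p) = 0"
    apply (rule HD_zero'[OF U p Rel, where v = "Yd 2"])
     apply ((rule HDI p qOm[OF p])+)
    by (simp del: ev.simps)
  have Dxall: "\<forall>r\<in>U. pd (Xd i) E r - (ev (G1 1 i) r * pd (Yd 1) E r + ev (G1 2 i) r * pd (Yd 2) E r) = 0"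
    if i: "i \<in> {1,2}" for i
    using Dx[OF _ i] by blast
  have DY: "pd (Yd j) (pd (Xd i) E) p - (ev (dM j (G1 1 i)) p * pd (Yd 1) E p + ev (G1 1 i) p * pd (Yd j) (pd (Yd 1) E) p
      + (ev (dM j (G1 2 i)) p * pd (Yd 2) E p + ev (G1 2 i) p * pd (Yd j) (pd (Yd 2) E) p)) = 0"
    if i: "i \<in> {1,2}" for i j
    apply (rule HD_zero'[OF U p Dxall[OF i], where v = "Yd j"])
     apply ((rule HDI p qOm[OF p])+)
    by (simp del: ev.simps)
  have PhiZ: "pd (Yd 2) E p * PhiR a b s t kk i (yc 1 p) (yc 2 p) = 0" if i: "i \<in> {1,2}" for i
  proof -
    note A = DY[OF i, of 1] DY[OF i, of 2] RX[of i] R1 R2 Rel[rule_format, OF p]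
      sch[OF p Yd_Basis Xd_Basis, of 1 i] sch[OF p Yd_Basis Xd_Basis, of 2 i]
      sch[OF p Yd_Basis Yd_Basis, of 1 2]
    show ?thesis unfolding PhiR_def ev_evm[symmetric] RM_def[symmetric]
      using A by algebra
  qed
  have E2: "(yc 1 p * ev RM p + yc 2 p) * pd (Yd 2) E p = 2 * E p"
    using S1[rule_format, OF p] Rel[rule_format, OF p] by algebra
  have Ep: "E p > 0" using Epos[OF p] .
  have P2: "pd (Yd 2) E p \<noteq> 0" and R: "yc 1 p * ev RM p + yc 2 p \<noteq> 0"
    using E2 Ep by auto
  have Ph1: "PhiR a b s t kk 1 (yc 1 p) (yc 2 p) = 0" using PhiZ[OF one_in] P2 by simp
  have Ph2: "PhiR a b s t kk 2 (yc 1 p) (yc 2 p) = 0" using PhiZ[OF two_in] P2 by simp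
  have x: "yc 1 p \<noteq> 0" and y: "yc 2 p \<noteq> 0" using qOm[OF p] by (auto simp: Om_def)
  note K = Kne[OF C1 C2 kkC st]
  show False
    by (rule final_alg[OF x y K Ph1 Ph2]) (use R in \<open>simp add: RM_def ev_evm\<close>)
qed

end

theorem mainTheorem15:
  fixes a b :: real and s t :: nat
  shows "\<not> (\<exists>(U :: pt set) (E :: pt \<Rightarrow> real).
            open U \<and> U \<subseteq> {p. yc 1 p \<noteq> 0 \<and> yc 2 p \<noteq> 0} \<and>
            (\<exists>p\<in>U. \<exists>i\<in>{1,2::nat}. \<exists>j\<in>{1,2::nat}. \<exists>k\<in>{1,2::nat}. \<exists>l\<in>{1,2::nat}.
                Berwald (fsp a b s t) i j k l p \<noteq> 0) \<and>
            smooth_on U E \<and>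
            cond_H U E \<and> cond_EL U (fsp a b s t) E \<and> cond_Ls U (fsp a b s t) E \<and>
            pos_def_g U E)"
proof
  assume "\<exists>(U :: pt set) (E :: pt \<Rightarrow> real).
            open U \<and> U \<subseteq> {p. yc 1 p \<noteq> 0 \<and> yc 2 p \<noteq> 0} \<and>
            (\<exists>p\<in>U. \<exists>i\<in>{1,2::nat}. \<exists>j\<in>{1,2::nat}. \<exists>k\<in>{1,2::nat}. \<exists>l\<in>{1,2::nat}.
                Berwald (fsp a b s t) i j k l p \<noteq> 0) \<and>
            smooth_on U E \<and>
            cond_H U E \<and> cond_EL U (fsp a b s t) E \<and> cond_Ls U (fsp a b s t) E \<and>
            pos_def_g U E"
  then obtain U E p i j k l where
    U: "open U" and UOm: "U \<subseteq> {p. yc 1 p \<noteq> 0 \<and> yc 2 p \<noteq> 0}" and p: "p \<in> U"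
    and ijkl: "i \<in> {1,2}" "j \<in> {1,2}" "k \<in> {1,2}" "l \<in> {1,2}"
    and B: "Berwald (fsp a b s t) i j k l p \<noteq> 0"
    and sm: "smooth_on U E" and H: "cond_H U E" and Ls: "cond_Ls U (fsp a b s t) E"
    and PD: "pos_def_g U E"
    by blast
  interpret S a b s t U E
    by unfold_locales (use U UOm sm H Ls PD in \<open>auto simp: Om_def\<close>)
  have pOm: "p \<in> Om" using UOm p by (auto simp: Om_def)
  have C: "-1/2 * a * real t * (real t - 1) * (real t - 2) \<noteq> 0 \<or> -1/2 * b * real s * (real s - 1) * (real s - 2) \<noteq> 0"
    using Berwald_zero[OF _ _ pOm ijkl] B by blast
  show False
  proof (cases "-1/2 * a * real t * (real t - 1) * (real t - 2) = 0")
    case True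
    then show False using caseB[OF p True] C by blast
  next
    case C1: False
    show False
    proof (cases "-1/2 * b * real s * (real s - 1) * (real s - 2) = 0")
      case True
      then show False using caseA[OF p True C1] by blast
    next
      case C2: False
      show False
      proof (cases "s = t")
        case True
        then show False using caseC[OF p C1 C2] by blast
      next
        case False
        then show False using caseD[OF p C1 C2] by blast
      qed
    qed
  qed
qed

end
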